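(* Let $X$ be a Hilbert space, $\widehat\beta:X\to[0,+\infty)$ convex and lower semicontinuous (hence continuous), $\beta=\partial\widehat\beta$, and for $u\in X$ let $\beta^0(u)$ be the element of $\beta(u)$ of minimal norm. Let $\Psi:[0,+\infty)\to[0,+\infty)$ be continuous. If $\|\beta^0(u)\|_X\le\Psi(\widehat\beta(u))$ for every $u\in X$, then $\|\zeta\|_X\le\Psi(\widehat\beta(u))$ for all $u\in X$ and all $\zeta\in\beta(u)$. *)

theory Defs
  imports "HOL-Analysis.Analysis"
begin

definition lsc :: "('a::topological_space \<Rightarrow> real) \<Rightarrow> bool" where
  "lsc f \<longleftrightarrow> (\<forall>c. closed {x. f x \<le> c})"

definition subdiff :: "('a::real_inner \<Rightarrow> real) \<Rightarrow> 'a \<Rightarrow> 'a set" where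
  "subdiff f u = {\<zeta>. \<forall>v. f v \<ge> f u + inner \<zeta> (v - u)}"

definition subdiff0 :: "('a::real_inner \<Rightarrow> real) \<Rightarrow> 'a \<Rightarrow> 'a" where
  "subdiff0 f u = (THE \<zeta>. \<zeta> \<in> subdiff f u \<and> (\<forall>\<eta>\<in>subdiff f u. norm \<zeta> \<le> norm \<eta>))"

end

theory Submission
  imports Defs
begin

lemma small_param:
  fixes A B C :: real
  assumes "\<And>\<theta>. 0 < \<theta> \<Longrightarrow> \<theta> \<le> 1 \<Longrightarrow> A \<le> B + \<theta> * C" and "C \<ge> 0"
  shows "A \<le> B"
proof (rule field_le_epsilon)
  fix e :: real assume e: "0 < e"
  define \<theta> where "\<theta> = min 1 (e / (C + 1))"
  have t0: "0 < \<theta>" using e assms(2) by (simp add: \<theta>_def)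
  have t1: "\<theta> \<le> 1" by (simp add: \<theta>_def)
  have "\<theta> * C \<le> e / (C + 1) * C"
    using assms(2) by (intro mult_right_mono) (auto simp: \<theta>_def)
  also have "\<dots> \<le> e" using e assms(2) by (simp add: field_simps)
  finally show "A \<le> B + e" using assms(1)[OF t0 t1] by linarith
qed

lemma parallelogram_mid:
  fixes a b :: "'a::real_inner"
  shows "(norm ((1/2) *\<^sub>R (a + b)))^2 = ((norm a)^2 + (norm b)^2)/2 - (norm (a - b))^2/4"
  by (simp add: power2_norm_eq_inner inner_add_left inner_add_right inner_diff_left
      inner_diff_right inner_commute field_simps)

lemma norm_add_sq:
  fixes a b :: "'a::real_inner"
  shows "(norm (a + b))^2 = (norm a)^2 + 2 * inner a b + (norm b)^2"
  by (simp add: power2_norm_eq_inner inner_add_left inner_add_right inner_commute)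

lemma min_exists:
  fixes g :: "'a::{real_inner,complete_space} \<Rightarrow> real"
  assumes ne: "S \<noteq> {}" and cl: "closed S"
    and mid: "\<And>x y. x \<in> S \<Longrightarrow> y \<in> S \<Longrightarrow> (1/2) *\<^sub>R (x + y) \<in> S"
    and bdd: "\<And>x. x \<in> S \<Longrightarrow> g x \<ge> 0"
    and c: "c > 0"
    and sc: "\<And>x y. x \<in> S \<Longrightarrow> y \<in> S \<Longrightarrow> g ((1/2) *\<^sub>R (x + y)) \<le> (g x + g y)/2 - c * (norm (x - y))^2"
    and lsc: "\<And>X y m. (\<forall>n. X n \<in> S) \<Longrightarrow> X \<longlonglongrightarrow> y \<Longrightarrow> (\<lambda>n. g (X n)) \<longlonglongrightarrow> m \<Longrightarrow> g y \<le> m"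
  shows "\<exists>x\<in>S. \<forall>y\<in>S. g x \<le> g y"
proof -
  define m where "m = Inf (g ` S)"
  have bb: "bdd_below (g ` S)" using bdd by (auto intro!: bdd_belowI[of _ 0])
  have le: "\<And>x. x \<in> S \<Longrightarrow> m \<le> g x" unfolding m_def by (rule cInf_lower) (use bb in auto)
  have "\<forall>n::nat. \<exists>x\<in>S. g x < m + inverse (real (Suc n))"
  proof
    fix n :: nat
    have "Inf (g ` S) < m + inverse (real (Suc n))" by (simp add: m_def)
    then obtain z where "z \<in> g ` S" "z < m + inverse (real (Suc n))"
      using cInf_lessD[of "g ` S"] ne by blast
    then show "\<exists>x\<in>S. g x < m + inverse (real (Suc n))" by auto
  qed
  then obtain X where X: "\<And>n. X n \<in> S" "\<And>n. g (X n) < m + inverse (real (Suc n))"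
    by metis
  have cauchy: "Cauchy X"
  proof (rule metric_CauchyI)
    fix e :: real assume e: "e > 0"
    obtain M :: nat where M: "inverse (real (Suc M)) < c * e^2"
      using reals_Archimedean[of "c * e^2"] c e by auto
    have "\<forall>i\<ge>M. \<forall>j\<ge>M. dist (X i) (X j) < e"
    proof (intro allI impI)
      fix i j assume ij: "M \<le> i" "M \<le> j"
      have mi: "inverse (real (Suc i)) \<le> inverse (real (Suc M))"
        using ij by (simp add: le_imp_inverse_le)
      have mj: "inverse (real (Suc j)) \<le> inverse (real (Suc M))"
        using ij by (simp add: le_imp_inverse_le)
      have "m \<le> g ((1/2) *\<^sub>R (X i + X j))" using le mid X by blast
      also have "\<dots> \<le> (g (X i) + g (X j))/2 - c * (norm (X i - X j))^2" using sc X by blast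
      finally have "c * (norm (X i - X j))^2 < c * e^2"
        using X(2)[of i] X(2)[of j] mi mj M by argo
      then have "(norm (X i - X j))^2 < e^2" using c by simp
      then have "norm (X i - X j) < e" using e by (simp add: power_less_imp_less_base)
      then show "dist (X i) (X j) < e" by (simp add: dist_norm)
    qed
    then show "\<exists>M. \<forall>i\<ge>M. \<forall>j\<ge>M. dist (X i) (X j) < e" by blast
  qed
  then obtain y where y: "X \<longlonglongrightarrow> y" using Cauchy_convergent convergent_def by blast
  have yS: "y \<in> S" using closed_sequentially[OF cl] X(1) y by blast
  have "(\<lambda>n. g (X n)) \<longlonglongrightarrow> m"
  proof (rule tendsto_sandwich[of "\<lambda>n. m" _ _ "\<lambda>n. m + inverse (real (Suc n))"])
    show "\<forall>\<^sub>F n in sequentially. m \<le> g (X n)" using le X by auto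
    show "\<forall>\<^sub>F n in sequentially. g (X n) \<le> m + inverse (real (Suc n))"
      using X(2) less_imp_le by (intro always_eventually) blast
    show "(\<lambda>n. m) \<longlonglongrightarrow> m" by simp
    show "(\<lambda>n. m + inverse (real (Suc n))) \<longlonglongrightarrow> m" by (rule LIMSEQ_inverse_real_of_nat_add)
  qed
  then have "g y \<le> m" using lsc X(1) y by blast
  then show ?thesis using yS le by force
qed

lemma subdiff_closed: "closed (subdiff f p)"
proof -
  have "subdiff f p = (\<Inter>v. {\<zeta>. f p + inner \<zeta> (v - p) \<le> f v})"
    by (auto simp: subdiff_def)
  moreover have "closed {\<zeta>. f p + inner \<zeta> (v - p) \<le> f v}" for v
    by (intro closed_Collect_le continuous_intros)
  ultimately show ?thesis by auto
qed

lemma subdiff_mid: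
  assumes "a \<in> subdiff f p" "b \<in> subdiff f p"
  shows "(1/2) *\<^sub>R (a + b) \<in> subdiff f p"
proof -
  have "f v \<ge> f p + inner ((1/2) *\<^sub>R (a + b)) (v - p)" for v
  proof -
    have "f v \<ge> f p + inner a (v - p)" "f v \<ge> f p + inner b (v - p)"
      using assms unfolding subdiff_def by auto
    then show ?thesis by (simp add: inner_add_left) argo
  qed
  then show ?thesis unfolding subdiff_def by auto
qed

lemma subdiff0_mem:
  fixes f :: "'a::{real_inner,complete_space} \<Rightarrow> real"
  assumes "subdiff f p \<noteq> {}"
  shows "subdiff0 f p \<in> subdiff f p"
proof -
  let ?S = "subdiff f p"
  have "\<exists>x\<in>?S. \<forall>y\<in>?S. (\<lambda>\<eta>. (norm \<eta>)^2) x \<le> (\<lambda>\<eta>. (norm \<eta>)^2) y"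
  proof (rule min_exists[where c = "1/4"])
    show "closed ?S" by (rule subdiff_closed)
    show "\<And>x y. x \<in> ?S \<Longrightarrow> y \<in> ?S \<Longrightarrow> (1/2) *\<^sub>R (x + y) \<in> ?S" by (rule subdiff_mid)
    show "\<And>x y. x \<in> ?S \<Longrightarrow> y \<in> ?S \<Longrightarrow> (norm ((1/2) *\<^sub>R (x + y)))^2 \<le>
        ((norm x)^2 + (norm y)^2)/2 - 1/4 * (norm (x - y))^2"
      by (subst parallelogram_mid) simp
    show "\<And>X y m. (\<forall>n. X n \<in> ?S) \<Longrightarrow> X \<longlonglongrightarrow> y \<Longrightarrow> (\<lambda>n. (norm (X n))^2) \<longlonglongrightarrow> m \<Longrightarrow> (norm y)^2 \<le> m"
    proof -
      fix X :: "nat \<Rightarrow> 'a" and y m assume a: "X \<longlonglongrightarrow> y" and b: "(\<lambda>n. (norm (X n))^2) \<longlonglongrightarrow> m"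
      have c: "(\<lambda>n. (norm (X n))^2) \<longlonglongrightarrow> (norm y)^2" using a by (intro tendsto_intros)
      have "(norm y)^2 = m" using LIMSEQ_unique[OF c b] .
      then show "(norm y)^2 \<le> m" by simp
    qed
  qed (use assms in auto)
  then obtain x where x0: "x \<in> ?S" and x1: "\<And>y. y \<in> ?S \<Longrightarrow> (norm x)^2 \<le> (norm y)^2"
    by blast
  have x: "x \<in> ?S" "\<And>y. y \<in> ?S \<Longrightarrow> norm x \<le> norm y"
    using x0 apply assumption
    by (rule power2_le_imp_le[OF x1 norm_ge_zero])
  have uniq: "z = x" if z: "z \<in> ?S" "\<forall>\<eta>\<in>?S. norm z \<le> norm \<eta>" for z
  proof -
    have m: "(1/2) *\<^sub>R (z + x) \<in> ?S" using subdiff_mid z x by blast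
    have zx: "norm z \<le> norm x" using z(2) x(1) by blast
    have xz: "norm x \<le> norm z" using x(2) z(1) by blast
    have nz: "(norm z)^2 = (norm x)^2" using antisym[OF zx xz] by simp
    have xm: "norm x \<le> norm ((1/2) *\<^sub>R (z + x))" using x(2) m by blast
    have xm2: "(norm x)^2 \<le> (norm ((1/2) *\<^sub>R (z + x)))^2"
      by (rule power_mono[OF xm norm_ge_zero])
    have "(norm (z - x))^2 \<le> 0" using parallelogram_mid[of z x] nz xm2 by argo
    then have "(norm (z - x))^2 = 0" using zero_le_power2[of "norm (z - x)"] by argo
    then show "z = x" by simp
  qed
  have P: "x \<in> ?S \<and> (\<forall>\<eta>\<in>?S. norm x \<le> norm \<eta>)" using x by blast
  have "subdiff0 f p = x"
    unfolding subdiff0_def by (rule the_equality[where P = "\<lambda>\<zeta>. \<zeta> \<in> ?S \<and> (\<forall>\<eta>\<in>?S. norm \<zeta> \<le> norm \<eta>)", OF P]) (use uniq in blast)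
  then show ?thesis using x by simp
qed

lemma prox:
  fixes f :: "'a::{real_inner,complete_space} \<Rightarrow> real"
  assumes nonneg: "\<And>u. f u \<ge> 0" and conv: "convex_on UNIV f" and lsc: "lsc f" and s: "s > 0"
  shows "\<exists>p. (1/s) *\<^sub>R (x - p) \<in> subdiff f p \<and> f p + (norm (p - x))^2/(2 * s) \<le> f x"
proof -
  define k where "k = 1/(2 * s)"
  have k: "k > 0" using s by (simp add: k_def)
  define g where "g v = f v + k * (norm (v - x))^2" for v
  have "\<exists>p\<in>UNIV. \<forall>y\<in>UNIV. g p \<le> g y"
  proof (rule min_exists[where c = "k/4"])
    show "\<And>y. y \<in> UNIV \<Longrightarrow> g y \<ge> 0" using nonneg k by (auto simp: g_def intro!: add_nonneg_nonneg)
    show "k/4 > 0" using k by simp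
    show "g ((1/2) *\<^sub>R (a + b)) \<le> (g a + g b)/2 - k/4 * (norm (a - b))^2"
      if "a \<in> UNIV" "b \<in> UNIV" for a b
    proof -
      have e1: "(1 - 1/2) *\<^sub>R a + (1/2) *\<^sub>R b = (1/2) *\<^sub>R (a + b)"
        by (simp add: scaleR_add_right)
      have f1: "f ((1/2) *\<^sub>R (a + b)) \<le> (f a + f b)/2"
        using convex_onD[OF conv, of "1/2" a b] unfolding e1 by simp
      have e2: "(1/2) *\<^sub>R (a + b) - x = (1/2) *\<^sub>R ((a - x) + (b - x))"
        by (simp add: algebra_simps) (simp add: scaleR_add_left[symmetric])
      have n1: "(norm ((1/2) *\<^sub>R (a + b) - x))^2 =
          ((norm (a - x))^2 + (norm (b - x))^2)/2 - (norm (a - b))^2/4"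
        unfolding e2 parallelogram_mid by simp
      have "k * (norm ((1/2) *\<^sub>R (a + b) - x))^2 =
          (k * (norm (a - x))^2 + k * (norm (b - x))^2)/2 - k/4 * (norm (a - b))^2"
        unfolding n1 by (simp add: algebra_simps)
      then show ?thesis using f1 unfolding g_def by argo
    qed
    show "g y \<le> m" if X: "\<forall>n. X n \<in> UNIV" "X \<longlonglongrightarrow> y" "(\<lambda>n. g (X n)) \<longlonglongrightarrow> m"
      for X :: "nat \<Rightarrow> 'a" and y m
    proof -
      have h: "(\<lambda>n. k * (norm (X n - x))^2) \<longlonglongrightarrow> k * (norm (y - x))^2"
        by (intro tendsto_intros X(2))
      have "(\<lambda>n. g (X n) - k * (norm (X n - x))^2) \<longlonglongrightarrow> m - k * (norm (y - x))^2"
        by (intro tendsto_intros X(3) h)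
      then have ft: "(\<lambda>n. f (X n)) \<longlonglongrightarrow> m - k * (norm (y - x))^2" by (simp add: g_def)
      have "f y \<le> m - k * (norm (y - x))^2"
      proof (rule field_le_epsilon)
        fix e :: real assume e: "e > 0"
        let ?L = "m - k * (norm (y - x))^2 + e"
        have ev: "\<forall>\<^sub>F n in sequentially. f (X n) < ?L"
          using order_tendstoD(2)[OF ft] e by simp
        have "y \<in> {z. f z \<le> ?L}"
        proof (rule Lim_in_closed_set[OF _ _ _ X(2)])
          show "closed {z. f z \<le> ?L}" using lsc unfolding lsc_def by blast
          show "\<forall>\<^sub>F n in sequentially. X n \<in> {z. f z \<le> ?L}"
            using ev by eventually_elim auto
        qed simp
        then show "f y \<le> ?L" by simp
      qed
      then show ?thesis unfolding g_def by argo
    qed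
  qed auto
  then obtain p where p: "\<And>y. g p \<le> g y" by auto
  have A: "f p + (norm (p - x))^2/(2 * s) \<le> f x"
    using p[of x] by (simp add: g_def k_def)
  have B: "f v \<ge> f p + inner ((1/s) *\<^sub>R (x - p)) (v - p)" for v
  proof -
    define d where "d = v - p"
    define I where "I = inner (p - x) d"
    define Nd where "Nd = (norm d)^2"
    define Np where "Np = (norm (p - x))^2"
    have step: "f p \<le> f v + 2*k*I + \<theta> * (k * Nd)" if th: "0 < \<theta>" "\<theta> \<le> 1" for \<theta>
    proof -
      have w1: "(1 - \<theta>) *\<^sub>R p + \<theta> *\<^sub>R v = p + \<theta> *\<^sub>R d"
        by (simp add: d_def algebra_simps)
      have cv: "f (p + \<theta> *\<^sub>R d) \<le> (1 - \<theta>) * f p + \<theta> * f v"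
        using convex_onD[OF conv, of \<theta> p v] th unfolding w1 by simp
      have w2: "p + \<theta> *\<^sub>R d - x = (p - x) + \<theta> *\<^sub>R d" by (simp add: algebra_simps)
      have nw: "(norm (p + \<theta> *\<^sub>R d - x))^2 = Np + 2*\<theta>*I + \<theta>^2 * Nd"
        unfolding w2 norm_add_sq by (simp add: Np_def I_def Nd_def power_mult_distrib)
      have "g p \<le> g (p + \<theta> *\<^sub>R d)" by (rule p)
      then have "f p + k * Np \<le> (1 - \<theta>) * f p + \<theta> * f v + k * (Np + 2*\<theta>*I + \<theta>^2 * Nd)"
        using cv unfolding g_def nw Np_def by argo
      then have "\<theta> * f p \<le> \<theta> * (f v + 2*k*I + \<theta> * (k * Nd))"
        by (simp add: algebra_simps power2_eq_square)
      then show ?thesis using th by simp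
    qed
    have "f p \<le> f v + 2*k*I"
    proof (rule small_param)
      show "0 \<le> k * Nd" unfolding Nd_def by (rule mult_nonneg_nonneg[OF less_imp_le[OF k] zero_le_power2])
    qed (rule step)
    moreover have "inner ((1/s) *\<^sub>R (x - p)) (v - p) = - (2*k*I)"
    proof -
      have i1: "inner ((1/s) *\<^sub>R (x - p)) (v - p) = (1/s) * inner (x - p) d"
        by (simp only: inner_scaleR_left d_def)
      have i2: "inner (x - p) d = - I" unfolding I_def by (metis inner_minus_left minus_diff_eq)
      have i3: "2*k = 1/s" unfolding k_def using s by simp
      show ?thesis unfolding i1 i2 i3 by simp
    qed
    ultimately show ?thesis by argo
  qed
  show ?thesis using A B unfolding subdiff_def by blast
qed

theorem mainTheorem5:
  fixes betah :: "'a::{real_inner, complete_space} \<Rightarrow> real"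
    and \<Psi> :: "real \<Rightarrow> real"
  assumes nonneg: "\<And>u. betah u \<ge> 0"
    and conv: "convex_on UNIV betah"
    and lsc: "lsc betah"
    and Psi_nonneg: "\<And>t. t \<ge> 0 \<Longrightarrow> \<Psi> t \<ge> 0"
    and Psi_cont: "continuous_on {0..} \<Psi>"
    and bound: "\<And>u. norm (subdiff0 betah u) \<le> \<Psi> (betah u)"
  shows "\<forall>u. \<forall>\<zeta>\<in>subdiff betah u. norm \<zeta> \<le> \<Psi> (betah u)"
proof (intro allI ballI)
  fix u \<zeta> assume zeta: "\<zeta> \<in> subdiff betah u"
  show "norm \<zeta> \<le> \<Psi> (betah u)"
  proof (cases "\<zeta> = 0")
    case True
    then show ?thesis using Psi_nonneg nonneg by simp
  next
    case False
    define Z where "Z = norm \<zeta>"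
    have Z: "Z > 0" using False by (simp add: Z_def)
    show ?thesis unfolding Z_def[symmetric]
    proof (rule field_le_epsilon)
      fix e :: real assume e: "e > 0"
      have fu0: "betah u \<in> {0..}" using nonneg by simp
      have "\<exists>\<delta>>0. \<forall>y\<in>{0..}. dist y (betah u) < \<delta> \<longrightarrow> dist (\<Psi> y) (\<Psi> (betah u)) < e/2"
        using Psi_cont fu0 half_gt_zero[OF e] unfolding continuous_on_iff by blast
      then obtain \<delta> where \<delta>: "\<delta> > 0"
        and h\<delta>: "\<And>y. y \<in> {0..} \<Longrightarrow> dist y (betah u) < \<delta> \<Longrightarrow> dist (\<Psi> y) (\<Psi> (betah u)) < e/2"
        by blast
      define r where "r = min (1/4) (e/(4*Z))"
      have r0: "r > 0" using e Z by (simp add: r_def)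
      have r1: "r \<le> 1/4" by (simp add: r_def)
      have "r * Z \<le> e/(4*Z) * Z" using Z by (intro mult_right_mono) (auto simp: r_def)
      also have "\<dots> = e/4" using Z by simp
      finally have rZ: "r * Z \<le> e/4" .
      define K where "K = \<bar>betah (u + \<zeta>) - betah u\<bar> + r * Z^2 + 1"
      have K: "K \<ge> 1" using r0 by (simp add: K_def)
      define t where "t = min 1 (\<delta>/(2*K))"
      have t0: "t > 0" using \<delta> K by (simp add: t_def)
      have t1: "t \<le> 1" by (simp add: t_def)
      have "t * K \<le> \<delta>/(2*K) * K" using K by (intro mult_right_mono) (auto simp: t_def)
      also have "\<dots> = \<delta>/2" using K by simp
      finally have tK: "t * K < \<delta>" using \<delta> by simp
      define x where "x = u + t *\<^sub>R \<zeta>"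
      have rtZ: "r * t * Z > 0" using r0 t0 Z by simp
      define s where "s = (r * t * Z)^2 / (2 * betah x + 1)"
      have den: "2 * betah x + 1 > 0" using nonneg[of x] by simp
      have s: "s > 0" unfolding s_def using rtZ den by (intro divide_pos_pos) auto
      obtain p where p1: "(1/s) *\<^sub>R (x - p) \<in> subdiff betah p"
        and p2: "betah p + (norm (p - x))^2/(2 * s) \<le> betah x"
        using prox[OF nonneg conv lsc s] by blast
      define D where "D = norm (p - x)"
      have D0: "D \<ge> 0" by (simp add: D_def)
      have D: "D \<le> r * t * Z"
      proof -
        have "D^2/(2 * s) \<le> betah x" using p2 nonneg[of p] unfolding D_def by argo
        then have d1: "D^2 \<le> betah x * (2 * s)" using pos_divide_le_eq[of "2 * s"] s by simp
        have d2: "s * (2 * betah x + 1) = betah x * (2 * s) + s" by (simp add: algebra_simps)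
        have cne: "2 * betah x + 1 \<noteq> 0" using den by simp
        have d3: "s * (2 * betah x + 1) = (r * t * Z)^2" using nonzero_eq_divide_eq[OF cne] s_def by blast
        have "D^2 \<le> (r * t * Z)^2" using d1 d2 d3 s by argo
        then show ?thesis by (rule power2_le_imp_le) (use rtZ in simp)
      qed
      have e1: "(1 - t) *\<^sub>R u + t *\<^sub>R (u + \<zeta>) = x" by (simp add: x_def algebra_simps)
      have fx_up: "betah x \<le> (1 - t) * betah u + t * betah (u + \<zeta>)"
        using convex_onD[OF conv, of t u "u + \<zeta>"] t0 t1 unfolding e1 by simp
      have fp_up: "betah p \<le> betah x"
      proof -
        have "(norm (p - x))^2/(2 * s) \<ge> 0" using s by simp
        then show ?thesis using p2 by argo
      qed
      have CS0: "inner \<zeta> (x - p) \<le> Z * D"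
        using norm_cauchy_schwarz[of \<zeta> "x - p"] by (simp add: Z_def D_def norm_minus_commute)
      have CS: "inner \<zeta> (p - x) \<ge> - (Z * D)"
      proof -
        have "inner \<zeta> (x - p) = - inner \<zeta> (p - x)" by (simp add: inner_diff_right)
        then show ?thesis using CS0 by argo
      qed
      have pu: "p - u = t *\<^sub>R \<zeta> + (p - x)" by (simp add: x_def algebra_simps)
      have iz: "inner \<zeta> (p - u) = t * Z^2 + inner \<zeta> (p - x)"
        by (simp add: pu inner_add_right Z_def power2_norm_eq_inner)
      have fp_low: "betah p \<ge> betah u + inner \<zeta> (p - u)" using zeta unfolding subdiff_def by blast
      have ZD: "Z * D \<le> Z * (r * t * Z)" using Z D by (intro mult_left_mono) auto
      have tZ2: "t * Z^2 \<ge> 0" using t0 by simp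
      have a1: "Z * (r * t * Z) = t * (r * Z^2)" by (simp add: algebra_simps power2_eq_square)
      have a2: "t * (r * Z^2) \<le> t * K" using t0 by (intro mult_left_mono) (auto simp: K_def)
      have a3: "t * (betah (u + \<zeta>) - betah u) \<le> t * K"
      proof -
        have rZ2: "r * Z^2 \<ge> 0" using r0 by simp
        have "betah (u + \<zeta>) - betah u \<le> K"
          unfolding K_def using abs_ge_self[of "betah (u + \<zeta>) - betah u"] rZ2 by argo
        then show ?thesis using t0 by (intro mult_left_mono) auto
      qed
      have a4: "(1 - t) * betah u + t * betah (u + \<zeta>) = betah u + t * (betah (u + \<zeta>) - betah u)"
        by (simp add: algebra_simps)
      have close: "\<bar>betah p - betah u\<bar> < \<delta>"
        using fp_low iz CS ZD tZ2 a1 a2 a3 a4 fx_up fp_up tK by argo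
      have Psi_close: "\<Psi> (betah p) < \<Psi> (betah u) + e/2"
      proof -
        have "dist (\<Psi> (betah p)) (\<Psi> (betah u)) < e/2"
          using h\<delta>[of "betah p"] close nonneg[of p] unfolding dist_real_def by simp
        then show ?thesis unfolding dist_real_def by argo
      qed
      define \<eta> where "\<eta> = subdiff0 betah p"
      have \<eta>: "\<eta> \<in> subdiff betah p" unfolding \<eta>_def by (rule subdiff0_mem) (use p1 in blast)
      have \<eta>b: "norm \<eta> \<le> \<Psi> (betah p)" unfolding \<eta>_def by (rule bound)
      have mono: "inner \<eta> (p - u) \<ge> inner \<zeta> (p - u)"
      proof -
        have "betah u \<ge> betah p + inner \<eta> (u - p)" using \<eta> unfolding subdiff_def by blast
        moreover have "inner \<eta> (u - p) = - inner \<eta> (p - u)" by (simp add: inner_diff_right)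
        ultimately show ?thesis using fp_low by argo
      qed
      have npu: "norm (p - u) \<le> t * Z + D"
        using norm_triangle_ineq[of "t *\<^sub>R \<zeta>" "p - x"] t0 unfolding pu by (simp add: Z_def D_def)
      have up: "inner \<eta> (p - u) \<le> norm \<eta> * (t * Z + D)"
        using norm_cauchy_schwarz[of \<eta> "p - u"] mult_left_mono[OF npu norm_ge_zero[of \<eta>]] by argo
      have key: "norm \<eta> * (t * Z + D) \<ge> t * Z^2 - Z * D"
        using up mono iz CS by argo
      have claim: "norm \<eta> \<ge> Z * (1 - 2 * r)"
      proof (rule ccontr)
        assume "\<not> norm \<eta> \<ge> Z * (1 - 2 * r)"
        then have lt: "norm \<eta> < Z * (1 - 2 * r)" by simp
        have pos: "t * Z + D > 0" using mult_pos_pos[OF t0 Z] D0 by argo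
        have b: "(1 - 2 * r) * (t * Z + D) - t * Z + D \<le> 0"
        proof -
          have "r * D \<ge> 0" using r0 D0 by simp
          moreover have "(1 - 2 * r) * (t * Z + D) - t * Z + D = 2 * D - 2 * (r * t * Z) - 2 * (r * D)"
            by (simp add: algebra_simps)
          ultimately show ?thesis using D by argo
        qed
        have "norm \<eta> * (t * Z + D) < Z * (1 - 2 * r) * (t * Z + D)"
          using lt pos by (rule mult_strict_right_mono)
        also have "Z * (1 - 2 * r) * (t * Z + D) = t * Z^2 - Z * D + Z * ((1 - 2 * r) * (t * Z + D) - t * Z + D)"
          by (simp add: algebra_simps power2_eq_square)
        also have "\<dots> \<le> t * Z^2 - Z * D"
          using mult_nonneg_nonpos[of Z, OF _ b] Z by simp
        finally show False using key by simp
      qed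
      have "Z * (1 - 2 * r) = Z - 2 * (r * Z)" by (simp add: algebra_simps)
      then show "Z \<le> \<Psi> (betah u) + e"
        using claim \<eta>b Psi_close rZ by argo
    qed
  qed
qed

end
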